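(* Let $M=(\mathbb N_0\times\mathbb N_0)\cup(\mathbb Z\times\mathbb N_{\ge2})\subseteq\mathbb Z^2$ and let $R=\mathbb R[x,y;M]$ be the monoid algebra of $M$ over $\mathbb R$ (monomials $x^ay^b$ with $(a,b)\in M$). Then $R$ is an IDF domain and is almost atomic, but $R$ is not atomic (in particular $R$ is not an FFD).
   Context: For an integral domain $R$: an irreducible is a nonzero nonunit $a$ with $a=uv$ forcing $u$ or $v$ a unit; an element is atomic if it is a unit or a finite product of irreducibles; $R$ is atomic if every nonzero element is atomic; $R$ is almost atomic if for every nonzero $b\in R$ there is an atomic element $a$ such that $ab$ is atomic; $R$ is an IDF domain if every nonzero element is divisible by only finitely many irreducibles up to associates; $R$ is an FFD if it is atomic and each nonzero element has finitely many factorizations up to order and associates. *)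

theory Defs
  imports Complex_Main "HOL-Library.Poly_Mapping" "HOL-Library.Product_Plus" "HOL-Library.Multiset"
begin

(* Ambient ring: Laurent polynomials in x,y over the reals, i.e. finitely supported
   functions Z^2 -> R with convolution product; (a,b) stands for x^a y^b. *)

definition M :: "(int \<times> int) set" where
  "M = {(a,b). (a \<ge> 0 \<and> b \<ge> 0) \<or> b \<ge> 2}"

definition Ralg :: "((int \<times> int) \<Rightarrow>\<^sub>0 real) set" where
  "Ralg = {p. Poly_Mapping.keys p \<subseteq> M}"

definition integral_domain_in :: "'a::comm_ring_1 set \<Rightarrow> bool" where
  "integral_domain_in S \<longleftrightarrow> 0 \<in> S \<and> 1 \<in> S \<and> (0::'a) \<noteq> 1 \<and>
     (\<forall>a\<in>S. \<forall>b\<in>S. a + b \<in> S \<and> a * b \<in> S) \<and> (\<forall>a\<in>S. - a \<in> S) \<and>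
     (\<forall>a\<in>S. \<forall>b\<in>S. a * b = 0 \<longrightarrow> a = 0 \<or> b = 0)"

definition unit_in :: "'a::comm_ring_1 set \<Rightarrow> 'a \<Rightarrow> bool" where
  "unit_in S u \<longleftrightarrow> u \<in> S \<and> (\<exists>v\<in>S. u * v = 1)"

definition dvd_in :: "'a::comm_ring_1 set \<Rightarrow> 'a \<Rightarrow> 'a \<Rightarrow> bool" where
  "dvd_in S a b \<longleftrightarrow> a \<in> S \<and> b \<in> S \<and> (\<exists>c\<in>S. b = a * c)"

definition assoc_in :: "'a::comm_ring_1 set \<Rightarrow> 'a \<Rightarrow> 'a \<Rightarrow> bool" where
  "assoc_in S a b \<longleftrightarrow> dvd_in S a b \<and> dvd_in S b a"

definition irreducible_in :: "'a::comm_ring_1 set \<Rightarrow> 'a \<Rightarrow> bool" where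
  "irreducible_in S a \<longleftrightarrow> a \<in> S \<and> a \<noteq> 0 \<and> \<not> unit_in S a \<and>
     (\<forall>u\<in>S. \<forall>v\<in>S. a = u * v \<longrightarrow> unit_in S u \<or> unit_in S v)"

definition factorization_in :: "'a::comm_ring_1 set \<Rightarrow> 'a \<Rightarrow> 'a list \<Rightarrow> bool" where
  "factorization_in S a xs \<longleftrightarrow> (\<forall>x\<in>set xs. irreducible_in S x) \<and> prod_list xs = a"

definition atomic_elem :: "'a::comm_ring_1 set \<Rightarrow> 'a \<Rightarrow> bool" where
  "atomic_elem S a \<longleftrightarrow> unit_in S a \<or> (\<exists>xs. xs \<noteq> [] \<and> factorization_in S a xs)"

definition atomic_dom :: "'a::comm_ring_1 set \<Rightarrow> bool" where
  "atomic_dom S \<longleftrightarrow> (\<forall>a\<in>S. a \<noteq> 0 \<longrightarrow> atomic_elem S a)"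

definition almost_atomic_dom :: "'a::comm_ring_1 set \<Rightarrow> bool" where
  "almost_atomic_dom S \<longleftrightarrow>
     (\<forall>b\<in>S. b \<noteq> 0 \<longrightarrow> (\<exists>a\<in>S. atomic_elem S a \<and> atomic_elem S (a * b)))"

definition IDF_dom :: "'a::comm_ring_1 set \<Rightarrow> bool" where
  "IDF_dom S \<longleftrightarrow> integral_domain_in S \<and>
     (\<forall>a\<in>S. a \<noteq> 0 \<longrightarrow> (\<exists>F. finite F \<and>
        (\<forall>p. irreducible_in S p \<and> dvd_in S p a \<longrightarrow> (\<exists>q\<in>F. assoc_in S p q))))"

definition fact_equiv :: "'a::comm_ring_1 set \<Rightarrow> 'a list \<Rightarrow> 'a list \<Rightarrow> bool" where
  "fact_equiv S xs ys \<longleftrightarrow> (\<exists>zs. mset zs = mset ys \<and> list_all2 (assoc_in S) xs zs)"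

definition FFD_dom :: "'a::comm_ring_1 set \<Rightarrow> bool" where
  "FFD_dom S \<longleftrightarrow> integral_domain_in S \<and> atomic_dom S \<and>
     (\<forall>a\<in>S. a \<noteq> 0 \<longrightarrow> (\<exists>F. finite F \<and>
        (\<forall>xs. factorization_in S a xs \<longrightarrow> (\<exists>ys\<in>F. fact_equiv S xs ys))))"

end

theory Submission
  imports Defs "HOL-Computational_Algebra.Computational_Algebra" "HOL-Computational_Algebra.Field_as_Ring"
begin


type_synonym L = "(int \<times> int) \<Rightarrow>\<^sub>0 real"
type_synonym P = "real poly poly"

lemma lookup_single_mult:
  fixes f :: "('a::ab_group_add) \<Rightarrow>\<^sub>0 ('b::comm_ring_1)"
  shows "Poly_Mapping.lookup (Poly_Mapping.single d r * f) k = r * Poly_Mapping.lookup f (k - d)"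
proof -
  have "Poly_Mapping.lookup (Poly_Mapping.single d r * f) k
     = (\<Sum>l. (r when d = l) * (\<Sum>q. Poly_Mapping.lookup f q when k = l + q))"
    by (simp add: lookup_mult lookup_single)
  also have "\<dots> = (\<Sum>l. (r * (\<Sum>q. Poly_Mapping.lookup f q when k = d + q)) when d = l)"
    by (rule Sum_any.cong) (auto simp: when_def)
  also have "\<dots> = r * (\<Sum>q. Poly_Mapping.lookup f q when k = d + q)" by simp
  also have "(\<Sum>q. Poly_Mapping.lookup f q when k = d + q) = (\<Sum>q. Poly_Mapping.lookup f q when q = k - d)"
    by (rule Sum_any.cong) (auto simp: when_def algebra_simps)
  also have "\<dots> = Poly_Mapping.lookup f (k - d)" by simp
  finally show ?thesis .
qed

definition ev :: "('a::comm_ring_1 \<Rightarrow> 'b::comm_ring_1) \<Rightarrow> 'b \<Rightarrow> 'a poly \<Rightarrow> 'b" where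
  "ev h x p = poly (map_poly h p) x"

locale rhom =
  fixes h :: "'a::comm_ring_1 \<Rightarrow> 'b::comm_ring_1"
  assumes hadd: "h (a + b) = h a + h b" and hmul: "h (a * b) = h a * h b" and h1: "h 1 = 1"
begin
lemma h0: "h 0 = 0" using hadd[of 0 0] by simp
lemma hsum: "h (sum f A) = sum (h \<circ> f) A"
  by (induction A rule: infinite_finite_induct) (auto simp: h0 hadd)

lemma mp_add: "map_poly h (p + q) = map_poly h p + map_poly h q"
  by (rule poly_eqI) (simp add: coeff_map_poly h0 hadd)
lemma mp_mult: "map_poly h (p * q) = map_poly h p * map_poly h q"
  by (rule poly_eqI) (simp add: coeff_map_poly h0 coeff_mult hsum hmul)
lemma ev_add: "ev h x (p + q) = ev h x p + ev h x q"
  by (simp add: ev_def mp_add)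
lemma ev_mult: "ev h x (p * q) = ev h x p * ev h x q"
  by (simp add: ev_def mp_mult)
lemma ev_1: "ev h x 1 = 1"
  by (simp add: ev_def h1 h0)
lemma ev_pCons: "ev h x (pCons a p) = h a + x * ev h x p"
  by (simp add: ev_def h0 map_poly_pCons)
lemma ev_const: "ev h x [:a:] = h a"
  by (simp add: ev_def h0 map_poly_pCons)
lemma ev_hom: "rhom (ev h x)"
  by standard (auto simp: ev_add ev_mult ev_1)
end

definition cL :: "real \<Rightarrow> L" where "cL r = Poly_Mapping.single (0,0) r"
definition monoL :: "int \<times> int \<Rightarrow> L" where "monoL e = Poly_Mapping.single e 1"

lemma cL_hom: "rhom cL"
  by standard (auto simp: cL_def single_add mult_single zero_prod_def[symmetric] one_poly_mapping_def)

definition psi :: "real poly \<Rightarrow> L" where "psi = ev cL (monoL (1,0))"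
definition phi :: "P \<Rightarrow> L" where "phi = ev psi (monoL (0,1))"

lemma psi_hom: "rhom psi" unfolding psi_def by (rule rhom.ev_hom[OF cL_hom])
lemma phi_hom: "rhom phi" unfolding phi_def by (rule rhom.ev_hom[OF psi_hom])

lemma lookup_psi: "Poly_Mapping.lookup (psi c) (a,b) = (if b = 0 \<and> a \<ge> 0 then coeff c (nat a) else 0)"
proof (induction c arbitrary: a)
  case (pCons r c)
  have e: "psi (pCons r c) = cL r + monoL (1,0) * psi c"
    unfolding psi_def by (rule rhom.ev_pCons[OF cL_hom])
  show ?case
    using pCons(2)[of "a - 1"]
    by (auto simp: e lookup_add monoL_def lookup_single_mult cL_def lookup_single when_def
             coeff_pCons split: nat.split)
       (auto simp: nat_diff_distrib')
qed (simp add: psi_def ev_def)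

lemma (in rhom) hminus: "h (a - b) = h a - h b"
  using hadd[of "a - b" b] by (simp add: algebra_simps)
lemma (in rhom) hpow: "h (a ^ n) = h a ^ n"
  by (induction n) (auto simp: hmul h1)

lemma lookup_phi: "Poly_Mapping.lookup (phi p) (a,b) =
   (if a \<ge> 0 \<and> b \<ge> 0 then coeff (coeff p (nat b)) (nat a) else 0)"
proof (induction p arbitrary: b)
  case (pCons c p)
  have e: "phi (pCons c p) = psi c + monoL (0,1) * phi p"
    unfolding phi_def by (rule rhom.ev_pCons[OF psi_hom])
  show ?case
    using pCons(2)[of "b - 1"]
    by (auto simp: e lookup_add monoL_def lookup_single_mult lookup_psi
             coeff_pCons split: nat.split)
       (auto simp: nat_diff_distrib')
qed (simp add: phi_def ev_def)

lemma phi_eq0: "phi p = 0 \<Longrightarrow> p = 0"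
proof -
  assume "phi p = 0"
  then have "\<And>a b. coeff (coeff p b) a = 0"
    using lookup_phi[of p "int a" "int b" for a b] by simp
  then show "p = 0" by (intro poly_eqI) (simp add: poly_eq_iff)
qed

lemma phi_inj: "phi p = phi q \<Longrightarrow> p = q"
  using phi_eq0[of "p - q"] rhom.hminus[OF phi_hom] by auto

lemma phi_mult: "phi (p * q) = phi p * phi q" by (rule rhom.hmul[OF phi_hom])
lemma phi_add: "phi (p + q) = phi p + phi q" by (rule rhom.hadd[OF phi_hom])
lemma phi_1: "phi 1 = 1" by (rule rhom.h1[OF phi_hom])
lemma phi_pow: "phi (p ^ n) = phi p ^ n" by (rule rhom.hpow[OF phi_hom])

lemma keys_phi: "k \<in> Poly_Mapping.keys (phi p) \<Longrightarrow> fst k \<ge> 0 \<and> snd k \<ge> 0"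
  by (cases k) (auto simp: in_keys_iff lookup_phi split: if_splits)

lemma phi_monom: "phi (monom (monom c i) j) = Poly_Mapping.single (int i, int j) c"
  by (rule poly_mapping_eqI) (auto simp: lookup_phi lookup_single when_def coeff_monom split: if_splits)

lemma mono_mult: "monoL a * monoL b = monoL (a + b)"
  by (simp add: monoL_def mult_single)
lemma mono_zero [simp]: "monoL 0 = 1"
  by (simp add: monoL_def)
lemma mono_0: "monoL (0,0) = 1"
  by (simp add: zero_prod_def[symmetric])
lemma mono_inv: "monoL a * monoL (- a) = 1"
  by (simp add: mono_mult mono_0 zero_prod_def[symmetric])

definition Xp :: P where "Xp = [:[:0,1:]:]"
definition Yp :: P where "Yp = [:0,1:]"

lemma Xp_monom: "Xp = monom (monom 1 1) 0" by (simp add: Xp_def monom_altdef)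
lemma Yp_monom: "Yp = monom (monom 1 0) 1" by (simp add: Yp_def monom_altdef)
lemma phi_Xp: "phi Xp = monoL (1,0)" by (simp only: Xp_monom phi_monom) (simp add: monoL_def)
lemma phi_Yp: "phi Yp = monoL (0,1)" by (simp only: Yp_monom phi_monom) (simp add: monoL_def)
lemma mono_pow: "monoL (a,b) ^ n = monoL (int n * a, int n * b)"
  by (induction n) (auto simp: mono_0 mono_mult algebra_simps)
lemma phi_XY: "phi (Xp ^ i * Yp ^ j) = monoL (int i, int j)"
  by (simp add: phi_mult phi_pow phi_Xp phi_Yp mono_pow mono_mult)

definition rep :: "L \<Rightarrow> bool" where "rep f \<longleftrightarrow> (\<exists>N::nat. \<exists>p. f = monoL (- int N, - int N) * phi p)"

lemma rep_shift: "monoL (- int N, - int N) * phi p = monoL (- int (N+K), - int (N+K)) * phi (Xp ^ K * Yp ^ K * p)"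
proof -
  have "monoL (- int (N+K), - int (N+K)) * phi (Xp ^ K * Yp ^ K * p)
       = (monoL (- int (N+K), - int (N+K)) * monoL (int K, int K)) * phi p"
    proof -
      have "phi (Xp ^ K * Yp ^ K * p) = monoL (int K, int K) * phi p"
        by (simp only: phi_mult[of "Xp ^ K * Yp ^ K" p] phi_XY)
      then show ?thesis by (simp add: mult.assoc)
    qed
  also have "monoL (- int (N+K), - int (N+K)) * monoL (int K, int K) = monoL (- int N, - int N)"
    by (simp add: mono_mult)
  finally show ?thesis by simp
qed

lemma rep_add: "rep f \<Longrightarrow> rep g \<Longrightarrow> rep (f + g)"
proof -
  assume "rep f" "rep g"
  then obtain N p K q where f: "f = monoL (- int N, - int N) * phi p" and g: "g = monoL (- int K, - int K) * phi q"
    unfolding rep_def by blast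
  have "f = monoL (- int (N+K), - int (N+K)) * phi (Xp ^ K * Yp ^ K * p)"
    using f rep_shift by simp
  moreover have "g = monoL (- int (N+K), - int (N+K)) * phi (Xp ^ N * Yp ^ N * q)"
    using g rep_shift[of K q N] by (simp add: add.commute)
  ultimately show "rep (f + g)" unfolding rep_def
    by (metis distrib_left phi_add)
qed

lemma rep_single: "rep (Poly_Mapping.single k r)"
proof (cases k)
  case (Pair a b)
  define N where "N = nat (max \<bar>a\<bar> \<bar>b\<bar>)"
  have "a + int N \<ge> 0" "b + int N \<ge> 0" unfolding N_def by auto
  then have "Poly_Mapping.single k r = monoL (- int N, - int N) * phi (monom (monom r (nat (a + int N))) (nat (b + int N)))"
    by (simp add: phi_monom monoL_def mult_single Pair N_def)
  then show ?thesis unfolding rep_def by blast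
qed

lemma rep_all: "rep f"
proof -
  have "f = (\<Sum>k\<in>Poly_Mapping.keys f. Poly_Mapping.single k (Poly_Mapping.lookup f k))"
    by (rule poly_mapping_eqI) (simp add: lookup_sum lookup_single when_def in_keys_iff)
  also have "rep \<dots>"
  proof (induction rule: finite_induct[OF finite_keys])
    case 1 then show ?case unfolding rep_def by (rule exI[of _ 0], rule exI[of _ 0]) (simp add: phi_def ev_def)
  next
    case (2 x F) then show ?case by (simp add: rep_add rep_single)
  qed
  finally show ?thesis .
qed

lemma L_rep: obtains s p where "f = monoL s * phi p"
  using rep_all[of f] unfolding rep_def by blast

lemma L_domain: "(f::L) * g = 0 \<Longrightarrow> f = 0 \<or> g = 0"
proof -
  assume fg: "f * g = 0"
  obtain s p where f: "f = monoL s * phi p" by (rule L_rep)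
  obtain t q where g: "g = monoL t * phi q" by (rule L_rep)
  have "monoL (- s - t) * (f * g) = (monoL (- s - t) * monoL s * monoL t) * phi (p * q)"
    by (simp add: f g phi_mult ac_simps)
  also have "monoL (- s - t) * monoL s * monoL t = 1" by (simp add: mono_mult mono_0 zero_prod_def[symmetric])
  finally have "phi (p * q) = 0" using fg by simp
  then have "p * q = 0" by (rule phi_eq0)
  then have "p = 0 \<or> q = 0" by simp
  then show ?thesis using f g by (auto simp: phi_def ev_def)
qed

lemma prime_Xp: "prime_elem Xp"
  by (simp add: Xp_def prime_elem_const_poly_iff prime_elem_linear_field_poly)
lemma prime_Yp: "prime_elem Yp"
  unfolding Yp_def by (rule prime_elem_linear_poly) auto

lemma L_nf:
  assumes "f \<noteq> 0"
  obtains s p where "f = monoL s * phi p" "p \<noteq> 0" "\<not> Xp dvd p" "\<not> Yp dvd p"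
proof -
  obtain s p where f: "f = monoL s * phi p" by (rule L_rep)
  have p0: "p \<noteq> 0" using assms f by (auto simp: phi_def ev_def)
  have nuX: "\<not> is_unit Xp" using prime_Xp by (simp add: prime_elem_def)
  have nuY: "\<not> is_unit Yp" using prime_Yp by (simp add: prime_elem_def)
  obtain p1 where p1: "p = Xp ^ multiplicity Xp p * p1" "\<not> Xp dvd p1"
    using multiplicity_decompose'[of p Xp] p0 nuX by blast
  have "p1 \<noteq> 0" using p1 p0 by auto
  then obtain p2 where p2: "p1 = Yp ^ multiplicity Yp p1 * p2" "\<not> Yp dvd p2"
    using multiplicity_decompose'[of p1 Yp] nuY by blast
  have "\<not> Xp dvd p2" using p1(2) p2(1) by (metis dvd_mult2 mult.commute)
  moreover have "p2 \<noteq> 0" using p2(2) by auto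
  moreover have "phi p = monoL (int (multiplicity Xp p), int (multiplicity Yp p1)) * phi p2"
    using p1(1) p2(1) phi_XY by (metis mult.assoc phi_mult)
  then have "f = monoL (s + (int (multiplicity Xp p), int (multiplicity Yp p1))) * phi p2"
    using f by (simp add: mult.assoc[symmetric] mono_mult)
  ultimately show ?thesis using that p2(2) by blast
qed

lemma poly_dvd_monom:
  fixes p q :: "'a::idom poly"
  assumes "p * q = monom r j" "r \<noteq> 0"
  obtains c d where "p = monom c d" "c \<noteq> 0"
proof -
  have nz: "p * q \<noteq> 0" using assms by simp
  then have p0: "p \<noteq> 0" and q0: "q \<noteq> 0" by auto
  have "order 0 p + order 0 q = j" using order_mult[OF nz, of 0] assms order_0_monom by simp
  moreover have "degree p + degree q = j" using degree_mult_eq[OF p0 q0] assms(1) degree_monom_eq[OF assms(2)] by simp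
  moreover have "order 0 p \<le> degree p" "order 0 q \<le> degree q" using order_degree p0 q0 by auto
  ultimately have od: "order 0 p = degree p" by linarith
  then have "monom 1 (degree p) dvd p" using monom_1_dvd_iff[OF p0] by simp
  then obtain w where w: "p = monom 1 (degree p) * w" by blast
  then have "w \<noteq> 0" using p0 by auto
  then have "degree p = degree p + degree w"
    using w by (metis degree_monom_eq degree_mult_eq monom_eq_0_iff one_neq_zero)
  then have "degree w = 0" by simp
  then obtain c where "w = [:c:]" by (rule degree_eq_zeroE)
  then have "p = monom c (degree p)" using w by (simp add: monom_0[symmetric] mult_monom)
  moreover have "c \<noteq> 0" using p0 calculation by auto
  ultimately show ?thesis using that by blast
qed

lemma L_dvd_monom:
  assumes "(f::L) * g = Poly_Mapping.single e c" "c \<noteq> 0"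
  obtains e' c' where "f = Poly_Mapping.single e' c'" "c' \<noteq> 0"
proof -
  obtain s p where f: "f = monoL s * phi p" by (rule L_rep)
  obtain t q where g: "g = monoL t * phi q" by (rule L_rep)
  have "monoL (- s - t) * (f * g) = (monoL (- s - t) * monoL s * monoL t) * phi (p * q)"
    by (simp add: f g phi_mult ac_simps)
  also have "monoL (- s - t) * monoL s * monoL t = 1" by (simp add: mono_mult)
  finally have pq: "phi (p * q) = Poly_Mapping.single (e - s - t) c"
    using assms(1) by (simp add: monoL_def mult_single algebra_simps)
  obtain k1 k2 where k: "e - s - t = (k1, k2)" by (cases "e - s - t")
  have "(k1,k2) \<in> Poly_Mapping.keys (phi (p * q))" using pq k assms(2) by simp
  then have k0: "k1 \<ge> 0" "k2 \<ge> 0" using keys_phi by fastforce+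
  then have "phi (p * q) = phi (monom (monom c (nat k1)) (nat k2))"
    using pq k by (simp add: phi_monom)
  then have pq': "p * q = monom (monom c (nat k1)) (nat k2)" by (rule phi_inj)
  have mc: "monom c (nat k1) \<noteq> 0" using assms(2) by simp
  obtain r' j' where p: "p = monom r' j'" "r' \<noteq> 0" using poly_dvd_monom[OF pq' mc] by blast
  obtain r'' j'' where q: "q = monom r'' j''" "r'' \<noteq> 0"
    using poly_dvd_monom[of q p, OF _ mc] pq' by (metis mult.commute)
  have "monom (r' * r'') (j' + j'') = monom (monom c (nat k1)) (nat k2)"
    using pq' p q by (simp add: mult_monom)
  then have "r' * r'' = monom c (nat k1)" using p(2) q(2) by (simp add: monom_eq_iff')
  then obtain c' i' where r': "r' = monom c' i'" "c' \<noteq> 0"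
    using poly_dvd_monom[of r' r'' c "nat k1"] assms(2) by blast
  have "f = Poly_Mapping.single (s + (int i', int j')) c'"
    using f p r' by (simp add: phi_monom monoL_def mult_single)
  then show ?thesis using that r'(2) by blast
qed



abbreviation R :: "L set" where "R \<equiv> Ralg"

lemma M_add: "a \<in> M \<Longrightarrow> b \<in> M \<Longrightarrow> a + b \<in> M"
  by (cases a; cases b) (auto simp: M_def)
lemma M_snd: "a \<in> M \<Longrightarrow> snd a \<ge> 0"
  by (cases a) (auto simp: M_def)

lemma R_mult: "f \<in> R \<Longrightarrow> g \<in> R \<Longrightarrow> f * g \<in> R"
  unfolding Ralg_def using keys_mult[of f g] M_add by blast
lemma R_add: "f \<in> R \<Longrightarrow> g \<in> R \<Longrightarrow> f + g \<in> R"
  unfolding Ralg_def using keys_add[of f g] by blast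
lemma R_uminus: "f \<in> R \<Longrightarrow> - f \<in> R"
  unfolding Ralg_def by simp
lemma R_0: "0 \<in> R" by (simp add: Ralg_def)
lemma R_1: "1 \<in> R" by (simp add: Ralg_def M_def zero_prod_def)

lemma R_single: "Poly_Mapping.single e c \<in> R \<longleftrightarrow> c = 0 \<or> e \<in> M"
  by (auto simp: Ralg_def)

lemma single_eq: "Poly_Mapping.single e c = Poly_Mapping.single e' c' \<Longrightarrow> c \<noteq> 0 \<Longrightarrow> e = e' \<and> c = c'"
  by (metis lookup_single_eq lookup_single_not_eq)

lemma one_L: "(1::L) = Poly_Mapping.single (0,0) 1"
  by (simp add: zero_prod_def[symmetric])

lemma L_zero_ne_one: "(0::L) \<noteq> 1"
  by (metis lookup_single_eq one_L lookup_zero zero_neq_one)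

lemma R_domain: "integral_domain_in R"
  unfolding integral_domain_in_def
proof (intro conjI ballI impI)
  fix a b assume "a \<in> R" "b \<in> R" "a * b = 0"
  then show "a = 0 \<or> b = 0" using L_domain by simp
qed (auto simp: R_0 R_1 L_zero_ne_one R_add R_mult R_uminus)

lemma unit_R_iff: "unit_in R u \<longleftrightarrow> (\<exists>c. c \<noteq> 0 \<and> u = Poly_Mapping.single (0,0) c)"
proof
  assume "unit_in R u"
  then obtain v where uv: "u \<in> R" "v \<in> R" "u * v = 1" unfolding unit_in_def by blast
  then have uv': "u * v = Poly_Mapping.single (0,0) 1" using one_L by simp
  obtain e c where u: "u = Poly_Mapping.single e c" "c \<noteq> 0"
    using L_dvd_monom[OF uv'] by auto
  obtain e' c' where v: "v = Poly_Mapping.single e' c'" "c' \<noteq> 0"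
    using L_dvd_monom[of v u] uv' by (metis mult.commute zero_neq_one)
  have "Poly_Mapping.single (e + e') (c * c') = Poly_Mapping.single (0,0) 1"
    using uv' u v by (simp add: mult_single)
  then have ee: "e + e' = (0,0)" using single_eq[of "e + e'" "c * c'" "(0,0)" 1] u(2) v(2) by simp
  have "e \<in> M" "e' \<in> M" using uv u v R_single by auto
  with ee have "e = (0,0)" by (cases e; cases e') (auto simp: M_def)
  then show "\<exists>c. c \<noteq> 0 \<and> u = Poly_Mapping.single (0,0) c" using u by blast
next
  assume "\<exists>c. c \<noteq> 0 \<and> u = Poly_Mapping.single (0,0) c"
  then obtain c where c: "c \<noteq> 0" "u = Poly_Mapping.single (0,0) c" by blast
  have "u * Poly_Mapping.single (0,0) (1/c) = 1" using c by (simp add: mult_single one_L)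
  moreover have "u \<in> R" "Poly_Mapping.single (0,0) (1/c) \<in> R" using c by (auto simp: R_single M_def)
  ultimately show "unit_in R u" unfolding unit_in_def by blast
qed

lemma unit_single: "unit_in R (Poly_Mapping.single e c) \<longleftrightarrow> c \<noteq> 0 \<and> e = (0,0)"
proof
  assume "unit_in R (Poly_Mapping.single e c)"
  then obtain c' where c': "c' \<noteq> 0" "Poly_Mapping.single e c = Poly_Mapping.single (0,0) c'"
    unfolding unit_R_iff by blast
  then have "(0,0) = e \<and> c' = c" using single_eq[of "(0,0)" c' e c] by simp
  then show "c \<noteq> 0 \<and> e = (0,0)" using c' by simp
next
  assume "c \<noteq> 0 \<and> e = (0,0)"
  then show "unit_in R (Poly_Mapping.single e c)" unfolding unit_R_iff by blast
qed

lemma irr_single_fst: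
  assumes "irreducible_in R (Poly_Mapping.single e c)"
  shows "fst e \<ge> 0"
proof (rule ccontr)
  assume neg: "\<not> fst e \<ge> 0"
  from assms have c: "c \<noteq> 0" and eM: "e \<in> M" unfolding irreducible_in_def by (auto simp: R_single)
  obtain a b where e: "e = (a,b)" by (cases e)
  have ab: "a < 0" "b \<ge> 2" using neg eM e by (auto simp: M_def)
  have "Poly_Mapping.single e c = Poly_Mapping.single (1,0) 1 * Poly_Mapping.single (a - 1, b) c"
    by (simp add: mult_single e)
  moreover have "Poly_Mapping.single (1,0) 1 \<in> R" "Poly_Mapping.single (a - 1, b) c \<in> R"
    using ab by (auto simp: R_single M_def)
  moreover have "\<not> unit_in R (Poly_Mapping.single (1,0) (1::real))"
    "\<not> unit_in R (Poly_Mapping.single (a - 1, b) c)"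
    using ab by (auto simp: unit_single)
  ultimately show False using assms unfolding irreducible_in_def by blast
qed

lemma prod_irr_single_fst:
  "(\<forall>x\<in>set xs. irreducible_in R x) \<Longrightarrow> prod_list xs = Poly_Mapping.single e c \<Longrightarrow> c \<noteq> 0 \<Longrightarrow> fst e \<ge> 0"
proof (induction xs arbitrary: e c)
  case Nil
  then have "Poly_Mapping.single (0,0) 1 = Poly_Mapping.single e c" using one_L by simp
  then have "(0,0) = e" using single_eq[of "(0,0)" 1 e c] by simp
  then show ?case by auto
next
  case (Cons x xs)
  have eq: "x * prod_list xs = Poly_Mapping.single e c" using Cons.prems by simp
  obtain e1 c1 where x: "x = Poly_Mapping.single e1 c1" "c1 \<noteq> 0"
    using L_dvd_monom[OF eq Cons.prems(3)] by auto
  obtain e2 c2 where xs: "prod_list xs = Poly_Mapping.single e2 c2" "c2 \<noteq> 0"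
    using L_dvd_monom[of "prod_list xs" x] eq Cons.prems(3) by (metis mult.commute)
  have "Poly_Mapping.single (e1 + e2) (c1 * c2) = Poly_Mapping.single e c"
    using eq x xs by (simp add: mult_single)
  then have "e = e1 + e2" using single_eq[of "e1 + e2" "c1 * c2" e c] x(2) xs(2) by simp
  moreover have "fst e1 \<ge> 0" using irr_single_fst[of e1 c1] Cons.prems(1) x by auto
  moreover have "fst e2 \<ge> 0" using Cons.IH Cons.prems(1) xs by auto
  ultimately show ?case by simp
qed

lemma not_atomic: "\<not> atomic_dom R"
proof
  assume "atomic_dom R"
  moreover have "Poly_Mapping.single (-1::int, 2::int) (1::real) \<in> R" by (simp add: R_single M_def)
  moreover have "Poly_Mapping.single (-1::int, 2::int) (1::real) \<noteq> 0"
    by (metis lookup_single_eq lookup_zero one_neq_zero)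
  ultimately have "atomic_elem R (Poly_Mapping.single (-1::int, 2::int) 1)" unfolding atomic_dom_def by blast
  moreover have "\<not> unit_in R (Poly_Mapping.single (-1::int, 2::int) (1::real))" by (simp add: unit_single)
  ultimately obtain xs where "factorization_in R (Poly_Mapping.single (-1::int, 2::int) 1) xs"
    unfolding atomic_elem_def by blast
  then have "fst (-1::int, 2::int) \<ge> 0"
    using prod_irr_single_fst[of xs "(-1,2)" 1] unfolding factorization_in_def by auto
  then show False by simp
qed

lemma not_FFD: "\<not> FFD_dom R"
  using not_atomic unfolding FFD_dom_def by blast

lemma finite_submsets: "finite {A. A \<subseteq># (B::'a multiset)}"
proof (induction B)
  case empty then show ?case by simp
next
  case (add x B)
  have "{A. A \<subseteq># add_mset x B} \<subseteq> {A. A \<subseteq># B} \<union> add_mset x ` {A. A \<subseteq># B}"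
  proof
    fix A assume "A \<in> {A. A \<subseteq># add_mset x B}"
    then have A: "A \<subseteq># add_mset x B" by simp
    show "A \<in> {A. A \<subseteq># B} \<union> add_mset x ` {A. A \<subseteq># B}"
    proof (cases "x \<in># A")
      case True
      then have "A = add_mset x (A - {#x#})" by simp
      moreover have "A - {#x#} \<subseteq># B" using A
        by (simp add: subset_eq_diff_conv)
      ultimately show ?thesis by blast
    next
      case False
      have "A - {#x#} \<subseteq># B" using A by (simp add: subset_eq_diff_conv)
      moreover have "A - {#x#} = A" using False by (simp add: diff_single_trivial)
      ultimately have "A \<subseteq># B" by simp
      then show ?thesis by blast
    qed
  qed
  moreover have "finite ({A. A \<subseteq># B} \<union> add_mset x ` {A. A \<subseteq># B})" using add by simp
  ultimately show ?case by (rule finite_subset)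
qed

lemma finite_norm_divisors:
  fixes p :: P
  assumes "p \<noteq> 0"
  shows "finite {d. d dvd p \<and> normalize d = d}"
proof -
  have "{d. d dvd p \<and> normalize d = d} \<subseteq> (normalize \<circ> prod_mset) ` {A. A \<subseteq># prime_factorization p}"
  proof
    fix d assume "d \<in> {d. d dvd p \<and> normalize d = d}"
    then have d: "d dvd p" "normalize d = d" by auto
    then have d0: "d \<noteq> 0" using assms by auto
    have "prime_factorization d \<subseteq># prime_factorization p"
      using prime_factorization_subset_iff_dvd[OF d0 assms] d by simp
    moreover have "d = normalize (prod_mset (prime_factorization d))"
      using prod_mset_prime_factorization_weak[OF d0] d by simp
    ultimately show "d \<in> (normalize \<circ> prod_mset) ` {A. A \<subseteq># prime_factorization p}" by auto
  qed
  then show ?thesis using finite_submsets by (rule finite_subset[OF _ finite_imageI])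
qed

lemma coprime_cancel_XY:
  fixes u p :: P
  assumes "\<not> Xp dvd u" "\<not> Yp dvd u" "u dvd Xp ^ a * Yp ^ b * p"
  shows "u dvd p"
proof -
  have "coprime Xp u" "coprime Yp u" using prime_elem_imp_coprime prime_Xp prime_Yp assms by auto
  then have "coprime u (Xp ^ a)" "coprime u (Yp ^ b)" by (auto simp: coprime_commute)
  then show ?thesis using assms(3) by (simp add: coprime_dvd_mult_right_iff mult.assoc)
qed

lemma unit_P: "is_unit (w::P) \<Longrightarrow> \<exists>k. k \<noteq> 0 \<and> w = [:[:k:]:]"
  by (auto simp: is_unit_poly_iff)

lemma phi_const: "phi [:[:k:]:] = Poly_Mapping.single (0,0) k"
  using phi_monom[of k 0 0] by (simp add: monom_0)

lemma Yp_dvd_iff: "Yp dvd p \<longleftrightarrow> coeff p 0 = 0"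
  using dvd_iff_poly_eq_0[of 0 p] by (simp add: Yp_def poly_0_coeff_0)

lemma keys_shift: "k' \<in> Poly_Mapping.keys (Poly_Mapping.single e c * (g::L)) \<longleftrightarrow> c \<noteq> 0 \<and> k' - e \<in> Poly_Mapping.keys g"
  by (simp add: in_keys_iff lookup_single_mult)

lemma irr_x_split:
  assumes "irreducible_in R q" "monoL (-1,0) * q \<in> R"
  shows "\<exists>c. q = Poly_Mapping.single (1,0) c"
proof -
  have "q = monoL (1,0) * (monoL (-1,0) * q)" by (simp add: mult.assoc[symmetric] mono_mult mono_0)
  moreover have "monoL (1,0) \<in> R" by (simp add: monoL_def R_single M_def)
  moreover have "\<not> unit_in R (monoL (1,0))" by (simp add: monoL_def unit_single)
  ultimately have "unit_in R (monoL (-1,0) * q)" using assms unfolding irreducible_in_def by blast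
  then obtain c where "monoL (-1,0) * q = Poly_Mapping.single (0,0) c" unfolding unit_R_iff by blast
  then have "monoL (1,0) * (monoL (-1,0) * q) = Poly_Mapping.single (1,0) c"
    by (simp add: monoL_def mult_single)
  then show ?thesis by (auto simp: mult.assoc[symmetric] mono_mult mono_0)
qed

lemma assoc_scalar:
  assumes "q \<in> R" "k \<noteq> 0" "q = Poly_Mapping.single (0,0) k * z"
  shows "assoc_in R q z"
proof -
  have sk: "Poly_Mapping.single (0,0) k \<in> R" "Poly_Mapping.single (0,0) (1/k) \<in> R"
    by (auto simp: R_single M_def)
  have z: "z = Poly_Mapping.single (0,0) (1/k) * q"
    using assms(2,3) by (simp add: mult.assoc[symmetric] mult_single one_L[symmetric])
  then have zR: "z \<in> R" using R_mult sk assms(1) by simp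
  show ?thesis unfolding assoc_in_def dvd_in_def
    using z assms(3) zR assms(1) sk by (metis mult.commute)
qed

lemma lookup_phi_nat: "Poly_Mapping.lookup (phi p) (int a, int b) = coeff (coeff p b) a"
  by (simp add: lookup_phi)

lemma IDF_main:
  assumes fR: "f \<in> R" and f0: "f \<noteq> 0"
  shows "\<exists>F. finite F \<and> (\<forall>q. irreducible_in R q \<and> dvd_in R q f \<longrightarrow> (\<exists>z\<in>F. assoc_in R q z))"
proof -
  obtain s p where f: "f = monoL s * phi p" "p \<noteq> 0" using L_nf[OF f0] by metis
  define D where "D = {d. d dvd p \<and> normalize d = d}"
  define F where "F = (\<Union>d\<in>D. (\<lambda>(a,b). monoL (a,b) * phi d) ` ({-int (degree (coeff d 0))..1} \<times> {0,1}))"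
  have finF: "finite F" unfolding F_def using finite_norm_divisors[OF f(2)] D_def by auto
  have "\<exists>z\<in>F. assoc_in R q z" if q: "irreducible_in R q" "dvd_in R q f" for q
  proof -
    obtain w where w: "w \<in> R" "f = q * w" using q(2) unfolding dvd_in_def by blast
    have qR: "q \<in> R" and q0: "q \<noteq> 0" using q(1) unfolding irreducible_in_def by auto
    obtain t u where qu: "q = monoL t * phi u" "u \<noteq> 0" "\<not> Xp dvd u" "\<not> Yp dvd u"
      using L_nf[OF q0] by metis
    obtain t' v where wv: "w = monoL t' * phi v" by (rule L_rep)
    obtain e1 e2 where e: "t + t' - s = (e1, e2)" by (cases "t + t' - s")
    have "phi p = monoL (- s) * f" using f by (simp add: mult.assoc[symmetric] mono_mult mono_0)
    also have "\<dots> = (monoL (- s) * monoL t * monoL t') * phi (u * v)"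
      using w(2) qu(1) wv by (simp add: phi_mult mult_ac)
    also have "monoL (- s) * monoL t * monoL t' = monoL (t + t' - s)" by (simp add: mono_mult algebra_simps)
    finally have pe: "phi p = monoL (e1, e2) * phi (u * v)" using e by simp
    define a1 where "a1 = nat (- e1)" define b1 where "b1 = nat (- e2)"
    define a2 where "a2 = nat e1" define b2 where "b2 = nat e2"
    have mm: "monoL (int a1, int b1) * monoL (e1, e2) = monoL (int a2, int b2)"
      unfolding a1_def b1_def a2_def b2_def by (simp add: mono_mult)
    have h1: "phi (Xp ^ a1 * Yp ^ b1 * p) = monoL (int a1, int b1) * phi p"
      by (simp only: phi_mult[of "Xp ^ a1 * Yp ^ b1" p] phi_XY)
    have h2: "phi (Xp ^ a2 * Yp ^ b2 * (u * v)) = monoL (int a2, int b2) * phi (u * v)"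
      by (simp only: phi_mult[of "Xp ^ a2 * Yp ^ b2" "u * v"] phi_XY)
    have "phi (Xp ^ a1 * Yp ^ b1 * p) = phi (Xp ^ a2 * Yp ^ b2 * (u * v))"
      unfolding h1 h2 pe mm[symmetric] by (simp add: mult.assoc)
    then have "Xp ^ a1 * Yp ^ b1 * p = Xp ^ a2 * Yp ^ b2 * (u * v)" by (rule phi_inj)
    then have "u dvd Xp ^ a1 * Yp ^ b1 * p" by (metis dvd_triv_left dvd_mult2 mult.commute)
    then have up: "u dvd p" using coprime_cancel_XY qu(3,4) by blast
    define d where "d = normalize u"
    have dD: "d \<in> D" unfolding D_def d_def using up by simp
    obtain k where k: "k \<noteq> 0" "unit_factor u = [:[:k:]:]"
      using unit_P[of "unit_factor u"] qu(2) by auto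
    have "u = [:[:k:]:] * d" unfolding d_def using k(2) unit_factor_mult_normalize[of u] by simp
    then have "phi u = Poly_Mapping.single (0,0) k * phi d" by (simp only: phi_mult phi_const)
    then have qd: "q = Poly_Mapping.single t k * phi d"
      using qu(1) by (simp add: monoL_def mult.assoc[symmetric] mult_single zero_prod_def[symmetric])
    have "\<not> Yp dvd d" using qu(4) unfolding d_def by simp
    then have c0: "coeff d 0 \<noteq> 0" by (simp add: Yp_dvd_iff)
    define m where "m = degree (coeff d 0)"
    have lm: "Poly_Mapping.lookup (phi d) (int m, 0) \<noteq> 0"
      using lookup_phi_nat[of d m 0] c0 unfolding m_def by simp
    obtain a b where t: "t = (a, b)" by (cases t)
    have keyq: "(a + int m, b) \<in> Poly_Mapping.keys q"
      using lm k(1) by (simp add: qd t in_keys_iff lookup_single_mult)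
    then have abM: "(a + int m, b) \<in> M" using qR unfolding Ralg_def by blast
    have keysq: "fst k' \<ge> a \<and> snd k' \<ge> b" if "k' \<in> Poly_Mapping.keys q" for k'
      using that keys_phi[of "k' - t" d] by (auto simp: qd keys_shift t)
    have shiftR: "monoL (-1,0) * q \<in> R" if "\<And>k'. k' \<in> Poly_Mapping.keys q \<Longrightarrow> k' + (-1,0) \<in> M"
      unfolding Ralg_def monoL_def
    proof (intro CollectI subsetI)
      fix k'' assume "k'' \<in> Poly_Mapping.keys (Poly_Mapping.single (-1, 0) 1 * q)"
      then have "k'' - (-1,0) \<in> Poly_Mapping.keys q" by (simp add: keys_shift)
      from that[OF this] show "k'' \<in> M" by simp
    qed
    have b1: "b \<le> 1"
    proof (rule ccontr)
      assume "\<not> b \<le> 1"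
      then have "monoL (-1,0) * q \<in> R"
        by (intro shiftR) (use keysq in \<open>fastforce simp: M_def\<close>)
      then obtain c where "q = Poly_Mapping.single (1,0) c" using irr_x_split q(1) by blast
      with keyq \<open>\<not> b \<le> 1\<close> show False by (auto split: if_splits)
    qed
    have b0: "b \<ge> 0" and am: "a \<ge> - int m" using abM b1 by (auto simp: M_def)
    have a1: "a \<le> 1"
    proof (rule ccontr)
      assume "\<not> a \<le> 1"
      then have "monoL (-1,0) * q \<in> R"
        by (intro shiftR) (use keysq b0 in \<open>fastforce simp: M_def\<close>)
      then obtain c where "q = Poly_Mapping.single (1,0) c" using irr_x_split q(1) by blast
      with keyq \<open>\<not> a \<le> 1\<close> show False by (auto split: if_splits)
    qed
    have zF: "monoL t * phi d \<in> F"
      unfolding F_def using dD am a1 b0 b1 t m_def by force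
    have "q = Poly_Mapping.single (0,0) k * (monoL t * phi d)"
      by (simp add: qd monoL_def mult.assoc[symmetric] mult_single zero_prod_def[symmetric])
    then have "assoc_in R q (monoL t * phi d)" using assoc_scalar qR k(1) by blast
    then show ?thesis using zF by blast
  qed
  then show ?thesis using finF by blast
qed

lemma IDF: "IDF_dom R"
  unfolding IDF_dom_def using R_domain IDF_main by blast

lemma single_nz: "c \<noteq> 0 \<Longrightarrow> Poly_Mapping.single e c \<noteq> (0::L)"
  by (metis lookup_single_eq lookup_zero)

lemma split_mono:
  assumes "phi p = monoL (e1, e2) * phi q"
  shows "\<exists>a1 b1 a2 b2. Xp ^ a1 * Yp ^ b1 * p = Xp ^ a2 * Yp ^ b2 * q"
proof -
  define a1 where "a1 = nat (- e1)" define b1 where "b1 = nat (- e2)"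
  define a2 where "a2 = nat e1" define b2 where "b2 = nat e2"
  have mm: "monoL (int a1, int b1) * monoL (e1, e2) = monoL (int a2, int b2)"
    unfolding a1_def b1_def a2_def b2_def by (simp add: mono_mult)
  have h1: "phi (Xp ^ a1 * Yp ^ b1 * p) = monoL (int a1, int b1) * phi p"
    by (simp only: phi_mult[of "Xp ^ a1 * Yp ^ b1" p] phi_XY)
  have h2: "phi (Xp ^ a2 * Yp ^ b2 * q) = monoL (int a2, int b2) * phi q"
    by (simp only: phi_mult[of "Xp ^ a2 * Yp ^ b2" q] phi_XY)
  have "phi (Xp ^ a1 * Yp ^ b1 * p) = phi (Xp ^ a2 * Yp ^ b2 * q)"
    unfolding h1 h2 assms mm[symmetric] by (simp add: mult.assoc)
  then show ?thesis using phi_inj by blast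
qed

lemma phi_R: "phi p \<in> R"
  unfolding Ralg_def using keys_phi by (fastforce simp: M_def)

lemma mono_R: "fst e \<ge> 0 \<Longrightarrow> snd e \<ge> 0 \<Longrightarrow> monoL e \<in> R"
  by (cases e) (simp add: monoL_def R_single M_def)

lemma irr_mono:
  assumes "e = (1,0) \<or> e = (0,1)"
  shows "irreducible_in R (monoL e)"
  unfolding irreducible_in_def
proof (intro conjI ballI impI)
  show "monoL e \<in> R" using assms mono_R by auto
  show "monoL e \<noteq> 0" unfolding monoL_def by (rule single_nz) simp
  show "\<not> unit_in R (monoL e)" using assms by (auto simp: monoL_def unit_single)
  fix u v assume uv: "u \<in> R" "v \<in> R" "monoL e = u * v"
  obtain e1 c1 where u: "u = Poly_Mapping.single e1 c1" "c1 \<noteq> 0"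
    using L_dvd_monom[of u v e 1] uv(3) by (auto simp: monoL_def)
  obtain e2 c2 where v: "v = Poly_Mapping.single e2 c2" "c2 \<noteq> 0"
    using L_dvd_monom[of v u e 1] uv(3) by (auto simp: monoL_def mult.commute)
  have "Poly_Mapping.single (e1 + e2) (c1 * c2) = Poly_Mapping.single e 1"
    using uv(3) u v by (simp add: mult_single monoL_def)
  then have ee: "e1 + e2 = e" using single_eq[of "e1 + e2" "c1 * c2" e 1] u(2) v(2) by simp
  have M: "e1 \<in> M" "e2 \<in> M" using uv u v R_single by auto
  have "e1 = (0,0) \<or> e2 = (0,0)"
    using assms ee M by (cases e1; cases e2) (auto simp: M_def)
  then show "unit_in R u \<or> unit_in R v" using u v by (auto simp: unit_single)
qed

lemma irr_scalar:
  assumes "irreducible_in R x" "c \<noteq> 0"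
  shows "irreducible_in R (Poly_Mapping.single (0,0) c * x)"
proof -
  have sR: "Poly_Mapping.single (0,0) c \<in> R" "Poly_Mapping.single (0,0) (1/c) \<in> R"
    by (auto simp: R_single M_def)
  have "Poly_Mapping.single (0,0) (1/c) * Poly_Mapping.single (0,0) c = Poly_Mapping.single (0,0) (1::real)"
    using assms(2) by (simp add: mult_single del: single_one)
  then have inv: "Poly_Mapping.single (0,0) (1/c) * Poly_Mapping.single (0,0) c = (1::L)"
    by (simp only: one_L)
  have xR: "x \<in> R" "x \<noteq> 0" and xnu: "\<not> unit_in R x"
    using assms(1) unfolding irreducible_in_def by blast+
  have xirr: "\<And>u v. u \<in> R \<Longrightarrow> v \<in> R \<Longrightarrow> x = u * v \<Longrightarrow> unit_in R u \<or> unit_in R v"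
    using assms(1) unfolding irreducible_in_def by blast
  have unit_mult: "unit_in R (Poly_Mapping.single (0,0) d * w)" if "unit_in R w" "d \<noteq> 0" for d w
  proof -
    from that(1) have "\<exists>c. c \<noteq> 0 \<and> w = Poly_Mapping.single (0,0) c" by (simp only: unit_R_iff)
    then obtain c' where c': "c' \<noteq> 0" "w = Poly_Mapping.single (0,0) c'" by blast
    have zz: "((0::int),(0::int)) + (0,0) = (0,0)" by simp
    have "Poly_Mapping.single (0,0) d * w = Poly_Mapping.single (0,0) (d * c')"
      unfolding c'(2) mult_single zz ..
    moreover have "d * c' \<noteq> 0" using that(2) c'(1) by simp
    ultimately have "\<exists>c. c \<noteq> 0 \<and> Poly_Mapping.single (0,0) d * w = Poly_Mapping.single (0,0) c" by blast
    then show ?thesis by (simp only: unit_R_iff)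
  qed
  show ?thesis unfolding irreducible_in_def
  proof (intro conjI ballI impI)
    show "Poly_Mapping.single (0,0) c * x \<in> R" using R_mult sR xR by simp
    show "Poly_Mapping.single (0,0) c * x \<noteq> 0"
      using L_domain[of "Poly_Mapping.single (0,0) c" x] single_nz[OF assms(2)] xR(2) by blast
    show "\<not> unit_in R (Poly_Mapping.single (0,0) c * x)"
    proof
      assume "unit_in R (Poly_Mapping.single (0,0) c * x)"
      then have "unit_in R (Poly_Mapping.single (0,0) (1/c) * (Poly_Mapping.single (0,0) c * x))"
        using unit_mult assms(2) by simp
      then show False using xnu inv by (simp add: mult.assoc[symmetric])
    qed
    fix u v assume uv: "u \<in> R" "v \<in> R" "Poly_Mapping.single (0,0) c * x = u * v"
    have "x = Poly_Mapping.single (0,0) (1/c) * (Poly_Mapping.single (0,0) c * x)"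
      using inv by (simp add: mult.assoc[symmetric])
    then have "x = (Poly_Mapping.single (0,0) (1/c) * u) * v"
      using uv(3) by (simp add: mult.assoc)
    moreover have "Poly_Mapping.single (0,0) (1/c) * u \<in> R" using R_mult sR(2) uv(1) by simp
    ultimately have "unit_in R (Poly_Mapping.single (0,0) (1/c) * u) \<or> unit_in R v"
      using xirr uv(2) by simp
    then show "unit_in R u \<or> unit_in R v"
    proof
      assume "unit_in R (Poly_Mapping.single (0,0) (1/c) * u)"
      then have "unit_in R (Poly_Mapping.single (0,0) c * (Poly_Mapping.single (0,0) (1/c) * u))"
        using unit_mult assms(2) by simp
      moreover have "Poly_Mapping.single (0,0) c * (Poly_Mapping.single (0,0) (1/c) * u) = u"
        using inv by (simp add: mult.assoc[symmetric] mult.commute[of "Poly_Mapping.single (0,0) c"])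
      ultimately show ?thesis by simp
    qed simp
  qed
qed

lemma atomic_scalar_prod:
  assumes "\<forall>x\<in>set xs. irreducible_in R x" "c \<noteq> 0"
  shows "atomic_elem R (Poly_Mapping.single (0,0) c * prod_list xs)"
proof (cases xs)
  case Nil
  have "unit_in R (Poly_Mapping.single (0,0) c)" using assms(2) unit_single by simp
  then show ?thesis using Nil unfolding atomic_elem_def by simp
next
  case (Cons x1 rest)
  have "factorization_in R (Poly_Mapping.single (0,0) c * prod_list xs) ((Poly_Mapping.single (0,0) c * x1) # rest)"
    using assms Cons irr_scalar[of x1 c] unfolding factorization_in_def by (simp add: mult.assoc)
  then show ?thesis unfolding atomic_elem_def by blast
qed

lemma prime_dvd_prime:
  fixes p q :: P
  assumes "prime_elem p" "prime_elem q" "p dvd q"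
  shows "q dvd p"
proof -
  obtain w where w: "q = p * w" using assms(3) by blast
  have "is_unit p \<or> is_unit w" using irreducibleD[OF prime_elem_imp_irreducible[OF assms(2)] w] .
  moreover have "\<not> is_unit p" using assms(1) by (simp add: prime_elem_def)
  ultimately have "is_unit w" by blast
  then show ?thesis using w mult_unit_dvd_iff[of w p p] by simp
qed

lemma prime_not_dvd_XY:
  fixes p :: P
  assumes "prime_elem p" "\<not> Xp dvd p" "\<not> Yp dvd p"
  shows "\<not> p dvd Xp ^ a * Yp ^ b"
proof
  assume "p dvd Xp ^ a * Yp ^ b"
  then have "p dvd Xp ^ a \<or> p dvd Yp ^ b" using prime_elem_dvd_mult_iff[OF assms(1)] by blast
  then have "p dvd Xp \<or> p dvd Yp" using prime_elem_dvd_power[OF assms(1)] by blast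
  then show False using prime_dvd_prime[OF assms(1) prime_Xp] prime_dvd_prime[OF assms(1) prime_Yp] assms(2,3)
    by blast
qed

lemma prime_shift:
  fixes pi :: P
  assumes pr: "prime_elem pi" and nX: "\<not> Xp dvd pi" and nY: "\<not> Yp dvd pi"
  obtains K z where "phi pi = monoL (int K, 0) * z" "irreducible_in R z"
proof -
  define S where "S = {K::nat. monoL (- int K, 0) * phi pi \<in> R}"
  have c0: "coeff pi 0 \<noteq> 0" using nY by (simp add: Yp_dvd_iff)
  define i0 where "i0 = degree (coeff pi 0)"
  have li0: "Poly_Mapping.lookup (phi pi) (int i0, 0) \<noteq> 0"
    using lookup_phi_nat[of pi i0 0] c0 unfolding i0_def by simp
  have keyz: "(int i0 - int K, 0) \<in> Poly_Mapping.keys (monoL (- int K, 0) * phi pi)" for K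
    using li0 by (simp add: monoL_def in_keys_iff lookup_single_mult)
  have Sb: "S \<subseteq> {..i0}"
  proof
    fix K assume "K \<in> S"
    then have "(int i0 - int K, 0) \<in> M" using keyz[of K] unfolding S_def Ralg_def by blast
    then show "K \<in> {..i0}" by (simp add: M_def)
  qed
  have "0 \<in> S" unfolding S_def using phi_R by (simp add: mono_0)
  then have finS: "finite S" "S \<noteq> {}" using Sb finite_subset by auto
  define K where "K = Max S"
  have KS: "K \<in> S" unfolding K_def using finS by simp
  have SK: "Suc K \<notin> S" using finS K_def by (metis Max_ge Suc_n_not_le_n)
  define z where "z = monoL (- int K, 0) * phi pi"
  have zR: "z \<in> R" using KS unfolding S_def z_def by simp
  have phiz: "phi pi = monoL (int K, 0) * z"
    unfolding z_def by (simp add: mult.assoc[symmetric] mono_mult mono_0)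
  have pi0: "pi \<noteq> 0" using pr by (simp add: prime_elem_def)
  have z0: "z \<noteq> 0" using keyz[of K] unfolding z_def by auto
  have keyzK: "(int i0 - int K, 0) \<in> Poly_Mapping.keys z" using keyz[of K] unfolding z_def .
  have monofac: "unit_in R v" if uv: "z = u * v" "u \<in> R" "v \<in> R" "v = Poly_Mapping.single tv cv" "cv \<noteq> 0" for u v tv cv
  proof -
    have tvM: "tv \<in> M" using uv(3,4,5) R_single by simp
    have inv: "Poly_Mapping.single tv cv * Poly_Mapping.single (- tv) (1/cv) = (1::L)"
    proof -
      have "Poly_Mapping.single tv cv * Poly_Mapping.single (- tv) (1/cv) = Poly_Mapping.single (0,0) (1::real)"
        using uv(5) by (simp add: mult_single zero_prod_def[symmetric] del: single_one)
      then show ?thesis by (simp only: one_L)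
    qed
    have u: "u = Poly_Mapping.single (- tv) (1/cv) * z"
      using uv(1,4) inv by (simp add: mult.assoc mult.commute[of "Poly_Mapping.single (- tv) (1/cv)"])
    have "(int i0 - int K, 0) - tv \<in> Poly_Mapping.keys u"
      using keyzK uv(5) unfolding u by (simp add: keys_shift)
    then have "(int i0 - int K, 0) - tv \<in> M" using uv(2) unfolding Ralg_def by blast
    then have t2: "snd tv = 0" using tvM by (cases tv) (auto simp: M_def)
    obtain t1 where tv: "tv = (t1, 0)" using t2 by (cases tv) auto
    have t1: "t1 \<ge> 0" using tvM tv by (simp add: M_def)
    have "t1 = 0"
    proof (rule ccontr)
      assume "t1 \<noteq> 0"
      then have "Poly_Mapping.single (t1 - 1, 0) cv \<in> R" using t1 by (simp add: R_single M_def)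
      then have "u * Poly_Mapping.single (t1 - 1, 0) cv \<in> R" using R_mult uv(2) by blast
      moreover have "u * Poly_Mapping.single (t1 - 1, 0) cv = monoL (- int (Suc K), 0) * phi pi"
      proof -
        have "monoL (- int (Suc K), 0) * phi pi = monoL (-1, 0) * z"
          unfolding z_def by (simp add: mult.assoc[symmetric] mono_mult)
        also have "\<dots> = u * (monoL (-1,0) * Poly_Mapping.single (t1, 0) cv)"
          using uv(1,4) tv by (simp add: mult_ac)
        also have "monoL (-1,0) * Poly_Mapping.single (t1, 0) cv = Poly_Mapping.single (t1 - 1, 0) cv"
          by (simp add: monoL_def mult_single)
        finally show ?thesis by simp
      qed
      ultimately have "Suc K \<in> S" unfolding S_def by simp
      then show False using SK by simp
    qed
    then show ?thesis using tv uv(4,5) by (simp add: unit_single)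
  qed
  have "irreducible_in R z"
    unfolding irreducible_in_def
  proof (intro conjI ballI impI)
    show "z \<in> R" by (rule zR)
    show "z \<noteq> 0" by (rule z0)
    show "\<not> unit_in R z"
    proof
      assume "unit_in R z"
      then have "\<exists>c. c \<noteq> 0 \<and> z = Poly_Mapping.single (0,0) c" by (simp only: unit_R_iff)
      then obtain c where c: "c \<noteq> 0" "z = Poly_Mapping.single (0,0) c" by blast
      have "phi pi = Poly_Mapping.single (int K, 0) c"
        using phiz c by (simp add: monoL_def mult_single)
      also have "\<dots> = phi [:monom c K:]" using phi_monom[of c K 0] by (simp add: monom_0)
      finally have pe: "pi = [:monom c K:]" by (rule phi_inj)
      show False
      proof (cases K)
        case 0
        then have "is_unit pi" using pe c by (simp add: monom_0 is_unit_const_poly_iff dvd_field_iff)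
        then show False using pr by (simp add: prime_elem_def)
      next
        case (Suc K')
        have "pi = Xp * [:monom c K':]"
          using pe Suc by (simp add: Xp_def monom_Suc)
        then have "Xp dvd pi" by (metis dvd_triv_left)
        then show False using nX by simp
      qed
    qed
    fix u v assume uv: "u \<in> R" "v \<in> R" "z = u * v"
    obtain sa pa where u: "u = monoL sa * phi pa" by (rule L_rep)
    obtain sb pb where v: "v = monoL sb * phi pb" by (rule L_rep)
    obtain e1 e2 where e: "(int K, 0) + sa + sb = (e1, e2)" by (cases "(int K, 0) + sa + sb")
    have "phi pi = (monoL (int K, 0) * monoL sa * monoL sb) * phi (pa * pb)"
      using phiz uv(3) u v by (simp add: phi_mult mult_ac)
    then have "phi pi = monoL (e1, e2) * phi (pa * pb)" using e by (simp add: mono_mult)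
    then obtain a1 b1 a2 b2 where ab: "Xp ^ a1 * Yp ^ b1 * pi = Xp ^ a2 * Yp ^ b2 * (pa * pb)"
      using split_mono by blast
    have "pi dvd Xp ^ a2 * Yp ^ b2 * (pa * pb)" using ab by (metis dvd_triv_right mult.assoc)
    moreover have "\<not> pi dvd Xp ^ a2 * Yp ^ b2" using prime_not_dvd_XY[OF pr nX nY] .
    ultimately have "pi dvd pa \<or> pi dvd pb" using prime_elem_dvd_mult_iff[OF pr] by blast
    then show "unit_in R u \<or> unit_in R v"
    proof
      assume "pi dvd pa"
      then obtain g where g: "pa = pi * g" by blast
      have "pi * (Xp ^ a1 * Yp ^ b1) = pi * (Xp ^ a2 * Yp ^ b2 * g * pb)"
        using ab g by (simp add: mult_ac)
      then have "Xp ^ a1 * Yp ^ b1 = Xp ^ a2 * Yp ^ b2 * g * pb" using pi0 by simp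
      then have "phi pb * (monoL (int a2, int b2) * phi g) = Poly_Mapping.single (int a1, int b1) 1"
        using phi_XY by (metis monoL_def mult.commute phi_mult)
      then obtain e' c' where "phi pb = Poly_Mapping.single e' c'" "c' \<noteq> 0"
        using L_dvd_monom[OF _ one_neq_zero] by blast
      then have "v = Poly_Mapping.single (sb + e') c'" using v by (simp add: monoL_def mult_single)
      then have "unit_in R v" using monofac uv \<open>c' \<noteq> 0\<close> by blast
      then show ?thesis by blast
    next
      assume "pi dvd pb"
      then obtain g where g: "pb = pi * g" by blast
      have "pi * (Xp ^ a1 * Yp ^ b1) = pi * (Xp ^ a2 * Yp ^ b2 * g * pa)"
        using ab g by (simp add: mult_ac)
      then have "Xp ^ a1 * Yp ^ b1 = Xp ^ a2 * Yp ^ b2 * g * pa" using pi0 by simp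
      then have "phi pa * (monoL (int a2, int b2) * phi g) = Poly_Mapping.single (int a1, int b1) 1"
        using phi_XY by (metis monoL_def mult.commute phi_mult)
      then obtain e' c' where "phi pa = Poly_Mapping.single e' c'" "c' \<noteq> 0"
        using L_dvd_monom[OF _ one_neq_zero] by blast
      then have "u = Poly_Mapping.single (sa + e') c'" using u by (simp add: monoL_def mult_single)
      then have "unit_in R u" using monofac[of v u] uv \<open>c' \<noteq> 0\<close> by (metis mult.commute)
      then show ?thesis by blast
    qed
  qed
  then show ?thesis using that phiz by blast
qed

lemma list_shift:
  "\<forall>p\<in>set ps. prime_elem p \<and> \<not> Xp dvd p \<and> \<not> Yp dvd p \<Longrightarrow>
   \<exists>K zs. phi (prod_list ps) = monoL (int K, 0) * prod_list zs \<and> (\<forall>z\<in>set zs. irreducible_in R z)"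
proof (induction ps)
  case Nil
  have "phi (prod_list []) = monoL (int 0, 0) * prod_list []" by (simp add: phi_1 mono_0)
  then show ?case by (metis empty_iff list.set(1))
next
  case (Cons p ps)
  obtain K zs where IH: "phi (prod_list ps) = monoL (int K, 0) * prod_list zs" "\<forall>z\<in>set zs. irreducible_in R z"
    using Cons by auto
  obtain K1 z1 where p: "phi p = monoL (int K1, 0) * z1" "irreducible_in R z1"
    using prime_shift[of p] Cons.prems by auto
  have "phi (prod_list (p # ps)) = (monoL (int K1, 0) * monoL (int K, 0)) * prod_list (z1 # zs)"
    using IH p by (simp add: phi_mult mult_ac)
  also have "monoL (int K1, 0) * monoL (int K, 0) = monoL (int (K1 + K), 0)" by (simp add: mono_mult)
  finally show ?case using IH p by (metis set_ConsD)
qed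

lemma prod_replicate_mono: "prod_list (replicate n (monoL (a, b))) = monoL (int n * a, int n * b)"
  by (simp add: mono_pow)

lemma almost_atomic: "almost_atomic_dom R"
  unfolding almost_atomic_dom_def
proof (intro ballI impI)
  fix b assume bR: "b \<in> R" and b0: "b \<noteq> 0"
  obtain s p0 where b: "b = monoL s * phi p0" "p0 \<noteq> 0" "\<not> Xp dvd p0" "\<not> Yp dvd p0"
    using L_nf[OF b0] by metis
  obtain ps where ps: "mset ps = prime_factorization p0" using ex_mset by blast
  define Q where "Q = prod_list ps"
  have "normalize Q = normalize p0"
    unfolding Q_def prod_mset_prod_list[symmetric] ps using prod_mset_prime_factorization_weak[OF b(2)] .
  then have QD: "Q dvd p0" "p0 dvd Q" using associated_iff_dvd by blast+
  obtain w where w: "p0 = Q * w" using QD(1) by blast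
  obtain w' where w': "Q = p0 * w'" using QD(2) by blast
  have "p0 * 1 = p0 * (w' * w)" using w w' by (simp add: mult_ac)
  then have "is_unit w" using b(2) by (metis mult_left_cancel dvd_triv_right)
  then obtain k where k: "k \<noteq> 0" "w = [:[:k:]:]" using unit_P by blast
  have pps: "\<forall>p\<in>set ps. prime_elem p \<and> \<not> Xp dvd p \<and> \<not> Yp dvd p"
  proof
    fix p assume "p \<in> set ps"
    then have pin: "p \<in> prime_factors p0" using ps by (metis set_mset_mset)
    then have "prime p" "p dvd p0" by auto
    then show "prime_elem p \<and> \<not> Xp dvd p \<and> \<not> Yp dvd p"
      using b(3,4) by (meson dvd_trans prime_def)
  qed
  obtain K zs where Kz: "phi Q = monoL (int K, 0) * prod_list zs" "\<forall>z\<in>set zs. irreducible_in R z"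
    using list_shift[OF pps] unfolding Q_def by blast
  obtain s1 s2 where s: "s = (s1, s2)" by (cases s)
  have "b = Poly_Mapping.single (0,0) k * (monoL (s1 + int K, s2) * prod_list zs)"
  proof -
    have "phi p0 = phi Q * Poly_Mapping.single (0,0) k"
      unfolding w k(2) by (simp only: phi_mult phi_const)
    then have "b = monoL s * (phi Q * Poly_Mapping.single (0,0) k)"
      using b(1) by simp
    also have "\<dots> = Poly_Mapping.single (0,0) k * ((monoL s * monoL (int K, 0)) * prod_list zs)"
      using Kz(1) by (simp add: mult_ac)
    finally show ?thesis using s by (simp add: mono_mult)
  qed
  note bb = this
  have c0: "coeff p0 0 \<noteq> 0" using b(4) by (simp add: Yp_dvd_iff)
  define i where "i = degree (coeff p0 0)"
  have "Poly_Mapping.lookup (phi p0) (int i, 0) \<noteq> 0"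
    using lookup_phi_nat[of p0 i 0] c0 unfolding i_def by simp
  then have "(s1 + int i, s2) \<in> Poly_Mapping.keys b"
    using b(1) s by (simp add: monoL_def in_keys_iff lookup_single_mult)
  then have "(s1 + int i, s2) \<in> M" using bR unfolding Ralg_def by blast
  then have s2: "s2 \<ge> 0" by (auto simp: M_def)
  define N where "N = nat (- (s1 + int K))"
  define n where "n = nat (s1 + int K)"
  have nN: "int N + (s1 + int K) = int n" unfolding N_def n_def by simp
  define a where "a = monoL (int N, 0)"
  have aR: "a \<in> R" unfolding a_def by (rule mono_R) auto
  have x: "irreducible_in R (monoL (1,0))" and y: "irreducible_in R (monoL (0,1))" by (auto intro: irr_mono)
  have "a = Poly_Mapping.single (0,0) 1 * prod_list (replicate N (monoL (1,0)))"
    unfolding a_def by (simp add: mono_pow one_L[symmetric])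
  then have aat: "atomic_elem R a" using atomic_scalar_prod[of "replicate N (monoL (1,0))" 1] x by simp
  have "a * b = Poly_Mapping.single (0,0) k * prod_list (replicate n (monoL (1,0)) @ replicate (nat s2) (monoL (0,1)) @ zs)"
  proof -
    have "a * b = Poly_Mapping.single (0,0) k * ((monoL (int N, 0) * monoL (s1 + int K, s2)) * prod_list zs)"
      unfolding bb a_def by (simp add: mult_ac)
    also have "monoL (int N, 0) * monoL (s1 + int K, s2) = monoL (int n, 0) * monoL (0, int (nat s2))"
      using nN s2 by (simp add: mono_mult)
    also have "monoL (int n, 0) * monoL (0, int (nat s2)) = prod_list (replicate n (monoL (1,0))) * prod_list (replicate (nat s2) (monoL (0,1)))"
      by (simp add: mono_pow)
    finally show ?thesis by (simp add: mult_ac)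
  qed
  moreover have "\<forall>z\<in>set (replicate n (monoL (1,0)) @ replicate (nat s2) (monoL (0,1)) @ zs). irreducible_in R z"
    using x y Kz(2) by auto
  ultimately have "atomic_elem R (a * b)" using atomic_scalar_prod k(1) by metis
  then show "\<exists>a\<in>R. atomic_elem R a \<and> atomic_elem R (a * b)" using aR aat by blast
qed

theorem mainTheorem12:
  shows "IDF_dom Ralg \<and> almost_atomic_dom Ralg \<and> \<not> atomic_dom Ralg \<and> \<not> FFD_dom Ralg"
  using IDF almost_atomic not_atomic not_FFD by blast

end
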